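(* The forcing $\mathbb{T}$ is not c.c.c.: letting $E\subseteq\omega$ be the even numbers and $O=\omega\setminus E$, and for each $a\subseteq O$ letting $p_a:=\{t\in 3^{<\omega}: \forall n\in O\cap|t|\,((n\in a\rightarrow t(n)=1)\wedge(n\notin a\rightarrow t(n)=0))\}$, the family $\{p_a: a\subseteq O\}$ consists of conditions of $\mathbb{T}$ and is an antichain of size $2^{\aleph_0}$.
   Context: $\mathbb{T}$ is the tree-forcing (ordered by inclusion) consisting of perfect trees $p\subseteq 3^{<\omega}$ together with a set $A_p\subseteq\omega$ (the splitting levels of $p$) such that: for every $t\in p$, $|t|\in A_p$ iff $t$ is a splitting node of $p$; every splitting node $t$ is fully splitting (i.e. $t^\frown i\in p$ for every $i\in 3$); for every $s\supseteq \mathrm{stem}(p)$ which is not splitting, $s^\frown 2\notin p$; and for all non-splitting $s,t\in p$ with $|s|=|t|$ and all $i\in 2$, $s^\frown i\in p\Leftrightarrow t^\frown i\in p$. Here $s^\frown i$ denotes the sequence $s$ extended by the value $i$, and $\mathrm{stem}(p)$ is the longest node of $p$ comparable with every node of $p$. *)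

theory Defs
  imports Main "HOL-Library.Sublist" "HOL-Library.Equipollence" "HOL-Library.Countable_Set"
begin

text \<open>Finite sequences in 3^{<omega} are lists over {0,1,2}; t(n) is t ! n;
  s extends t iff prefix t s; s^i is s @ [i].\<close>

definition seq3 :: "nat list set" where
  "seq3 = {t. set t \<subseteq> {0,1,2}}"

definition is_tree :: "nat list set \<Rightarrow> bool" where
  "is_tree p \<longleftrightarrow> p \<noteq> {} \<and> p \<subseteq> seq3 \<and> (\<forall>t\<in>p. \<forall>s. prefix s t \<longrightarrow> s \<in> p)"

definition splitting :: "nat list set \<Rightarrow> nat list \<Rightarrow> bool" where
  "splitting p t \<longleftrightarrow> t \<in> p \<and> (\<exists>i j. i \<noteq> j \<and> t @ [i] \<in> p \<and> t @ [j] \<in> p)"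

definition perfect_tree :: "nat list set \<Rightarrow> bool" where
  "perfect_tree p \<longleftrightarrow> is_tree p \<and> (\<forall>t\<in>p. \<exists>s\<in>p. prefix t s \<and> splitting p s)"

definition comparable :: "nat list \<Rightarrow> nat list \<Rightarrow> bool" where
  "comparable s t \<longleftrightarrow> prefix s t \<or> prefix t s"

definition stem :: "nat list set \<Rightarrow> nat list" where
  "stem p = (THE s. s \<in> p \<and> (\<forall>u\<in>p. comparable s u) \<and>
     (\<forall>s'. s' \<in> p \<and> (\<forall>u\<in>p. comparable s' u) \<longrightarrow> length s' \<le> length s))"

definition T_cond :: "nat list set \<Rightarrow> nat set \<Rightarrow> bool" where
  "T_cond p A \<longleftrightarrow> perfect_tree p
     \<and> (\<forall>t\<in>p. length t \<in> A \<longleftrightarrow> splitting p t)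
     \<and> (\<forall>t\<in>p. splitting p t \<longrightarrow> (\<forall>i<3. t @ [i] \<in> p))
     \<and> (\<forall>s\<in>p. prefix (stem p) s \<and> \<not> splitting p s \<longrightarrow> s @ [2] \<notin> p)
     \<and> (\<forall>s\<in>p. \<forall>t\<in>p. \<not> splitting p s \<and> \<not> splitting p t \<and> length s = length t \<longrightarrow>
          (\<forall>i<2. s @ [i] \<in> p \<longleftrightarrow> t @ [i] \<in> p))"

text \<open>The forcing T (conditions are the trees; A_p is determined by p), ordered by inclusion.\<close>
definition Tforcing :: "nat list set set" where
  "Tforcing = {p. \<exists>A. T_cond p A}"

definition T_compatible :: "nat list set \<Rightarrow> nat list set \<Rightarrow> bool" where
  "T_compatible p q \<longleftrightarrow> (\<exists>r\<in>Tforcing. r \<subseteq> p \<and> r \<subseteq> q)"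

definition T_antichain :: "nat list set set \<Rightarrow> bool" where
  "T_antichain X \<longleftrightarrow> X \<subseteq> Tforcing \<and> (\<forall>p\<in>X. \<forall>q\<in>X. p \<noteq> q \<longrightarrow> \<not> T_compatible p q)"

definition T_ccc :: bool where
  "T_ccc \<longleftrightarrow> (\<forall>X. T_antichain X \<longrightarrow> countable X)"

definition Odds :: "nat set" where
  "Odds = {n. odd n}"

definition p_of :: "nat set \<Rightarrow> nat list set" where
  "p_of a = {t \<in> seq3. \<forall>n\<in>Odds. n < length t \<longrightarrow>
              ((n \<in> a \<longrightarrow> t ! n = 1) \<and> (n \<notin> a \<longrightarrow> t ! n = 0))}"

end

theory Submission
  imports Defs
begin

lemma mem_p_of: "t \<in> p_of a \<longleftrightarrow> set t \<subseteq> {0,1,2} \<and> (\<forall>n. odd n \<longrightarrow> n < length t \<longrightarrow>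
              ((n \<in> a \<longrightarrow> t ! n = 1) \<and> (n \<notin> a \<longrightarrow> t ! n = 0)))"
  by (auto simp: p_of_def seq3_def Odds_def)

lemma snoc_p_of: "t @ [i] \<in> p_of a \<longleftrightarrow> t \<in> p_of a \<and> i \<in> {0,1,2} \<and>
   (odd (length t) \<longrightarrow> i = (if length t \<in> a then 1 else 0))"
  unfolding mem_p_of
  by (auto simp: nth_append less_Suc_eq)

lemma split_p_of: "splitting (p_of a) t \<longleftrightarrow> t \<in> p_of a \<and> even (length t)"
  unfolding splitting_def snoc_p_of
  apply (cases "length t \<in> a")
  by auto

lemma nil_p_of: "[] \<in> p_of a" by (simp add: mem_p_of)

lemma prefix_p_of: "t \<in> p_of a \<Longrightarrow> prefix s t \<Longrightarrow> s \<in> p_of a"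
  unfolding mem_p_of
  by (auto simp: prefix_def nth_append)

lemma stem_p_of: "stem (p_of a) = []"
proof -
  have "[0] \<in> p_of a" "[1] \<in> p_of a"
    using snoc_p_of[of "[]" _ a] nil_p_of[of a] by auto
  have key: "s' = []" if "\<forall>u\<in>p_of a. comparable s' u" for s'
  proof (rule ccontr)
    assume "s' \<noteq> []"
    then obtain x zs where sx: "s' = x # zs" by (cases s') auto
    have "comparable s' [0]" "comparable s' [1]" using that \<open>[0] \<in> p_of a\<close> \<open>[1] \<in> p_of a\<close> by auto
    hence "x = 0" "x = 1" unfolding comparable_def sx by (auto simp: prefix_def Cons_eq_append_conv)
    thus False by simp
  qed
  show ?thesis unfolding stem_def
    apply (rule the_equality)
    subgoal using nil_p_of[of a] key by (simp add: comparable_def)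
    subgoal for s using key[of s] by blast
    done
qed

lemma tcond_p_of: "T_cond (p_of a) {n. even n}"
proof -
  have tree: "is_tree (p_of a)"
  proof -
    have "p_of a \<noteq> {}" using nil_p_of by blast
    moreover have "p_of a \<subseteq> seq3" unfolding p_of_def by blast
    ultimately show ?thesis unfolding is_tree_def using prefix_p_of by blast
  qed
  have perf: "\<exists>s\<in>p_of a. prefix t s \<and> splitting (p_of a) s" if "t \<in> p_of a" for t
  proof (cases "even (length t)")
    case True then show ?thesis using that by (auto simp: split_p_of)
  next
    case False
    let ?c = "if length t \<in> a then 1 else 0"
    have "t @ [?c] \<in> p_of a" using that by (simp add: snoc_p_of)
    then show ?thesis using False by (auto simp: split_p_of intro!: bexI[of _ "t @ [?c]"])
  qed
  have c2: "\<forall>t\<in>p_of a. length t \<in> {n. even n} \<longleftrightarrow> splitting (p_of a) t"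
    by (simp add: split_p_of)
  have c3: "\<forall>t\<in>p_of a. splitting (p_of a) t \<longrightarrow> (\<forall>i<3. t @ [i] \<in> p_of a)"
  proof (intro ballI impI allI)
    fix t i assume "t \<in> p_of a" "splitting (p_of a) t" "i < (3::nat)"
    thus "t @ [i] \<in> p_of a" unfolding split_p_of snoc_p_of
      by (auto simp: numeral_3_eq_3 less_Suc_eq)
  qed
  have c4: "\<forall>s\<in>p_of a. prefix (stem (p_of a)) s \<and> \<not> splitting (p_of a) s \<longrightarrow> s @ [2] \<notin> p_of a"
    unfolding split_p_of snoc_p_of by auto
  have c5: "\<forall>s\<in>p_of a. \<forall>t\<in>p_of a. \<not> splitting (p_of a) s \<and> \<not> splitting (p_of a) t \<and> length s = length t \<longrightarrow>
          (\<forall>i<2. s @ [i] \<in> p_of a \<longleftrightarrow> t @ [i] \<in> p_of a)"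
    unfolding split_p_of snoc_p_of by auto
  show ?thesis unfolding T_cond_def perfect_tree_def
    using tree perf c2 c3 c4 c5 by blast
qed

lemma long_nodes: assumes "r \<in> Tforcing" shows "\<exists>t\<in>r. k \<le> length t"
proof (induction k)
  case 0
  then show ?case using assms by (auto simp: Tforcing_def T_cond_def perfect_tree_def is_tree_def)
next
  case (Suc k)
  then obtain t where t: "t \<in> r" "k \<le> length t" by auto
  then obtain s where "s \<in> r" "prefix t s" "splitting r s"
    using assms by (auto simp: Tforcing_def T_cond_def perfect_tree_def)
  then obtain i where "s @ [i] \<in> r" unfolding splitting_def by auto
  moreover have "length t \<le> length s" using \<open>prefix t s\<close> by (simp add: prefix_length_le)
  ultimately show ?case using t by (intro bexI[of _ "s @ [i]"]) auto
qed

lemma p_of_incompat: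
  assumes "a \<noteq> b" "a \<subseteq> Odds" "b \<subseteq> Odds"
  shows "\<not> T_compatible (p_of a) (p_of b)"
proof
  assume "T_compatible (p_of a) (p_of b)"
  then obtain r where r: "r \<in> Tforcing" "r \<subseteq> p_of a" "r \<subseteq> p_of b"
    by (auto simp: T_compatible_def)
  obtain n where n: "n \<in> a \<longleftrightarrow> n \<notin> b" using assms(1) by (metis set_eqI)
  hence "odd n" using assms by (auto simp: Odds_def)
  obtain t where "t \<in> r" "Suc n \<le> length t" using long_nodes[OF r(1)] by blast
  hence "t \<in> p_of a" "t \<in> p_of b" "n < length t" using r by auto
  thus False using n \<open>odd n\<close> unfolding mem_p_of by auto
qed

lemma p_of_inj: "inj_on p_of (Pow Odds)"
proof
  fix a b assume ab: "a \<in> Pow Odds" "b \<in> Pow Odds" "p_of a = p_of b"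
  show "a = b"
  proof (rule ccontr)
    assume "a \<noteq> b"
    then obtain n where n: "n \<in> a \<longleftrightarrow> n \<notin> b" by (metis set_eqI)
    hence "odd n" using ab by (auto simp: Odds_def)
    define t where "t = map (\<lambda>k. if k \<in> a then 1 else (0::nat)) (upt 0 (Suc n))"
    have lt: "length t = Suc n" unfolding t_def by (simp del: upt_Suc)
    have nt: "k < Suc n \<Longrightarrow> t ! k = (if k \<in> a then 1 else 0)" for k
      unfolding t_def by (simp del: upt_Suc)
    have "set t \<subseteq> {0,1,2}" unfolding t_def by (auto simp del: upt_Suc)
    hence "t \<in> p_of a" unfolding mem_p_of using lt nt by auto
    hence "t \<in> p_of b" using ab by simp
    hence "(n \<in> b \<longrightarrow> t ! n = 1) \<and> (n \<notin> b \<longrightarrow> t ! n = 0)"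
      unfolding mem_p_of using lt \<open>odd n\<close> by auto
    thus False using n nt[of n] by (auto split: if_splits)
  qed
qed

lemma card_part: "p_of ` Pow Odds \<approx> (UNIV :: nat set set)"
proof -
  have "bij_betw p_of (Pow Odds) (p_of ` Pow Odds)" by (rule inj_on_imp_bij_betw[OF p_of_inj])
  hence e1: "Pow Odds \<approx> p_of ` Pow Odds" unfolding eqpoll_def by blast
  have inj: "inj (\<lambda>n::nat. 2*n+1)" unfolding inj_on_def by simp
  have img: "range (\<lambda>n::nat. 2*n+1) = Odds"
  proof
    show "range (\<lambda>n::nat. 2*n+1) \<subseteq> Odds" unfolding Odds_def by auto
    show "Odds \<subseteq> range (\<lambda>n::nat. 2*n+1)"
    proof
      fix x assume "x \<in> Odds"
      then obtain k where "x = 2*k+1" unfolding Odds_def by (auto elim: oddE)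
      thus "x \<in> range (\<lambda>n::nat. 2*n+1)" by blast
    qed
  qed
  have "bij_betw (\<lambda>n::nat. 2*n+1) UNIV Odds" unfolding bij_betw_def using inj img by (rule conjI)
  hence "bij_betw (image (\<lambda>n::nat. 2*n+1)) (Pow UNIV) (Pow Odds)" by (rule bij_betw_image_Pow)
  hence e2: "Pow (UNIV::nat set) \<approx> Pow Odds" unfolding eqpoll_def by blast
  have "Pow (UNIV::nat set) \<approx> p_of ` Pow Odds" by (rule eqpoll_trans[OF e2 e1])
  hence "p_of ` Pow Odds \<approx> Pow (UNIV::nat set)" by (rule eqpoll_sym)
  thus ?thesis by simp
qed

lemma not_countable: "\<not> countable (UNIV :: nat set set)"
proof
  assume c: "countable (UNIV :: nat set set)"
  define f where "f = from_nat_into (UNIV :: nat set set)"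
  have "range f = UNIV" unfolding f_def using range_from_nat_into[OF _ c] by simp
  then obtain m where eq: "f m = {n. n \<notin> f n}" by (metis UNIV_I imageE)
  have "m \<in> f m \<longleftrightarrow> m \<in> {n. n \<notin> f n}" using eq by (rule arg_cong[where f="\<lambda>X. m \<in> X"])
  hence "m \<in> f m \<longleftrightarrow> m \<notin> f m" by (simp only: mem_Collect_eq)
  thus False by blast
qed

theorem mainTheorem1:
  shows "\<not> T_ccc
    \<and> (\<forall>a. a \<subseteq> Odds \<longrightarrow> p_of a \<in> Tforcing)
    \<and> T_antichain (p_of ` Pow Odds)
    \<and> p_of ` Pow Odds \<approx> (UNIV :: nat set set)"
proof -
  have A: "\<forall>a. a \<subseteq> Odds \<longrightarrow> p_of a \<in> Tforcing"
    using tcond_p_of by (auto simp: Tforcing_def)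
  have B: "T_antichain (p_of ` Pow Odds)"
    unfolding T_antichain_def
  proof (intro conjI ballI impI)
    show "p_of ` Pow Odds \<subseteq> Tforcing" using A by blast
    fix p q assume "p \<in> p_of ` Pow Odds" "q \<in> p_of ` Pow Odds" "p \<noteq> q"
    note pq = this
    from pq(1) obtain a where a: "a \<in> Pow Odds" "p = p_of a" by (rule imageE)
    from pq(2) obtain b where b: "b \<in> Pow Odds" "q = p_of b" by (rule imageE)
    have "a \<noteq> b" using pq(3) a(2) b(2) by blast
    moreover have "a \<subseteq> Odds" "b \<subseteq> Odds" using a(1) b(1) by (simp_all only: Pow_iff)
    ultimately have "\<not> T_compatible (p_of a) (p_of b)" by (rule p_of_incompat)
    thus "\<not> T_compatible p q" unfolding a(2) b(2) .
  qed
  have C: "p_of ` Pow Odds \<approx> (UNIV :: nat set set)" by (rule card_part)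
  have "\<not> countable (p_of ` Pow Odds)"
    using C not_countable countable_eqpoll eqpoll_sym by blast
  hence "\<not> T_ccc" unfolding T_ccc_def using B by blast
  thus ?thesis using A B C by (intro conjI)
qed

end
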